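(* Let $m, n$ be positive integers with $m \mid n$. Then $\mathcal{L}_n \subseteq \mathcal{L}_m$ and $\mathcal{M}_n \subseteq \mathcal{M}_m$. In particular, $\mathcal{L}_n \subseteq \mathcal{L}$ and $\mathcal{M}_n \subseteq \mathcal{M}$.
   Context: For an irrational real $\xi$ and positive integer $n$, $\lambda_n(\xi) = \limsup_{s/t \to \xi} \dfrac{\gcd(t,n)}{t^2 \left| \frac{s}{t} - \xi\right|}$ (limsup over rationals $s/t$, $t>0$, tending to $\xi$), and $\mathcal{L}_n = \{\lambda_n(\xi)\in\mathbb{R} : \xi\in\mathbb{R}\setminus\mathbb{Q}\}$. For reals $\xi\ne\xi'$, $\mu_n(\xi,\xi') = \sup_{(s,t)\in\mathbb{Z}^2\setminus\{0\}} \dfrac{\gcd(t,n)\,|\xi-\xi'|}{|s-t\xi|\,|s-t\xi'|}$ (with $\gcd(0,n)=n$), and $\mathcal{M}_n$ is the set of finite values of $\mu_n(\xi,\xi')$ over pairs of reals $\xi\neq\xi'$. The classical Lagrange and Markoff spectra are $\mathcal{L}=\mathcal{L}_1$ and $\mathcal{M}=\mathcal{M}_1$. *)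

theory Defs
  imports "HOL-Analysis.Analysis" "HOL-Library.Extended_Real" "HOL-Library.Liminf_Limsup"
begin

definition frac_filter :: "real \<Rightarrow> (int \<times> int) filter" where
  "frac_filter xi = inf (filtercomap (\<lambda>p. real_of_int (fst p) / real_of_int (snd p)) (at xi))
                     (principal {p. snd p > 0})"

definition lambda_n :: "nat \<Rightarrow> real \<Rightarrow> ereal" where
  "lambda_n n xi = Limsup (frac_filter xi)
     (\<lambda>(s,t). ereal (real_of_int (gcd t (int n)) /
        ((real_of_int t)\<^sup>2 * \<bar>real_of_int s / real_of_int t - xi\<bar>)))"

definition Lagrange_n :: "nat \<Rightarrow> real set" where
  "Lagrange_n n = {x. \<exists>xi. xi \<notin> \<rat> \<and> lambda_n n xi = ereal x}"

definition mu_n :: "nat \<Rightarrow> real \<Rightarrow> real \<Rightarrow> ereal" where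
  "mu_n n xi xi' = (SUP p \<in> (UNIV :: (int \<times> int) set) - {(0,0)}.
     (let s = real_of_int (fst p); t = real_of_int (snd p);
          d = \<bar>s - t * xi\<bar> * \<bar>s - t * xi'\<bar> in
      if d = 0 then \<infinity>
      else ereal (real_of_int (gcd (snd p) (int n)) * \<bar>xi - xi'\<bar> / d)))"

definition Markoff_n :: "nat \<Rightarrow> real set" where
  "Markoff_n n = {x. \<exists>xi xi'. xi \<noteq> xi' \<and> mu_n n xi xi' = ereal x}"

end

theory Submission
  imports Defs
begin

lemma Limsup_filter_mono:
  assumes "F \<le> G"
  shows "Limsup F f \<le> Limsup G (f :: 'a \<Rightarrow> 'b :: complete_lattice)"
  unfolding Limsup_def
  by (rule INF_superset_mono) (use assms in \<open>auto simp: le_filter_def\<close>)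

lemma Limsup_split:
  fixes f :: "'a \<Rightarrow> ereal"
  assumes "finite D" "D \<noteq> {}" "eventually (\<lambda>x. \<exists>d\<in>D. x \<in> A d) F"
  shows "\<exists>d\<in>D. Limsup F f \<le> Limsup (inf F (principal (A d))) f"
proof -
  define M where "M = Max ((\<lambda>d. Limsup (inf F (principal (A d))) f) ` D)"
  have Mge: "Limsup (inf F (principal (A d))) f \<le> M" if "d \<in> D" for d
    unfolding M_def using assms(1) that by (intro Max_ge) auto
  have Min: "M \<in> (\<lambda>d. Limsup (inf F (principal (A d))) f) ` D"
    unfolding M_def using assms(1,2) by (intro Max_in) auto
  have "Limsup F f \<le> M"
    unfolding Limsup_le_iff
  proof (intro allI impI)
    fix y assume y: "M < y"
    have "\<forall>d\<in>D. eventually (\<lambda>x. x \<in> A d \<longrightarrow> f x < y) F"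
    proof
      fix d assume "d \<in> D"
      hence "Limsup (inf F (principal (A d))) f < y" using Mge y by (meson le_less_trans)
      hence "eventually (\<lambda>x. f x < y) (inf F (principal (A d)))" by (rule Limsup_lessD)
      thus "eventually (\<lambda>x. x \<in> A d \<longrightarrow> f x < y) F" by (simp add: eventually_inf_principal)
    qed
    hence "eventually (\<lambda>x. \<forall>d\<in>D. x \<in> A d \<longrightarrow> f x < y) F"
      by (rule eventually_ball_finite_distrib[OF assms(1), THEN iffD2])
    thus "eventually (\<lambda>x. y > f x) F"
      using assms(3) by eventually_elim blast
  qed
  thus ?thesis using Min by auto
qed

lemma SUP_split:
  fixes f :: "'a \<Rightarrow> ereal"
  assumes "finite D" "D \<noteq> {}" "\<And>x. x \<in> S \<Longrightarrow> \<exists>d\<in>D. x \<in> B d"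
  shows "\<exists>d\<in>D. (SUP x\<in>S. f x) \<le> (SUP x\<in>S \<inter> B d. f x)"
proof -
  define M where "M = Max ((\<lambda>d. (SUP x\<in>S \<inter> B d. f x)) ` D)"
  have Mge: "(SUP x\<in>S \<inter> B d. f x) \<le> M" if "d \<in> D" for d
    unfolding M_def using assms(1) that by (intro Max_ge) auto
  have Min: "M \<in> (\<lambda>d. (SUP x\<in>S \<inter> B d. f x)) ` D"
    unfolding M_def using assms(1,2) by (intro Max_in) auto
  have "(SUP x\<in>S. f x) \<le> M"
  proof (rule SUP_least)
    fix x assume "x \<in> S"
    then obtain d where "d \<in> D" "x \<in> B d" using assms(3) by blast
    hence "f x \<le> (SUP x\<in>S \<inter> B d. f x)" using \<open>x \<in> S\<close> by (intro SUP_upper) auto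
    thus "f x \<le> M" using Mge \<open>d \<in> D\<close> by (meson order_trans)
  qed
  thus ?thesis using Min by auto
qed

lemma gcd_fwd:
  fixes t c :: int and m n :: nat
  assumes "c > 0" "int m * c dvd int n" "n > 0"
  shows "gcd t (int m) * c \<le> gcd (c * t) (int n)"
proof -
  have "gcd t (int m) * c = gcd (c * t) (c * int m)"
    using gcd_mult_distrib_int[of c t "int m"] assms(1) by (simp add: mult.commute)
  also have "\<dots> dvd gcd (c * t) (int n)"
    using assms(2) by (intro gcd_greatest gcd_dvd1 dvd_trans[OF gcd_dvd2]) (simp add: mult.commute)
  hence "gcd (c * t) (c * int m) \<le> gcd (c * t) (int n)"
    using assms(3) by (intro zdvd_imp_le) auto
  finally show ?thesis .
qed

lemma gcd_bwd:
  fixes g u :: int and m :: nat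
  assumes "g > 0" "g dvd int m" "m > 0"
  shows "g \<le> gcd (g * u) (int m)"
  using assms by (intro zdvd_imp_le) auto


lemma ff_pos: "eventually (\<lambda>p. snd p > 0) (frac_filter xi)"
  unfolding frac_filter_def eventually_inf_principal by simp

lemma ff_lim: "filterlim (\<lambda>p. real_of_int (fst p) / real_of_int (snd p)) (at xi) (frac_filter xi)"
  unfolding frac_filter_def
  by (rule filterlim_mono[OF filterlim_filtercomap]) auto

lemma ff_intro:
  assumes "eventually (\<lambda>p. snd (k p) > 0) F"
    and "filterlim (\<lambda>p. real_of_int (fst (k p)) / real_of_int (snd (k p))) (at xi) F"
  shows "filterlim k (frac_filter xi) F"
  unfolding frac_filter_def filterlim_inf filterlim_principal filterlim_filtercomap_iff
  using assms by (simp add: o_def)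

lemma filterlim_at_mult:
  fixes a y :: real
  assumes "a \<noteq> 0"
  shows "filterlim (\<lambda>x. x * a) (at (y * a)) (at y)"
  unfolding filterlim_at
proof
  show "eventually (\<lambda>x. x * a \<in> UNIV \<and> x * a \<noteq> y * a) (at y)"
    using assms by (auto simp: eventually_at_filter)
  show "((\<lambda>x. x * a) \<longlongrightarrow> y * a) (at y)"
    by (intro tendsto_intros)
qed

lemma Limsup_filter_mono':
  assumes "filterlim k G F"
  shows "Limsup F (\<lambda>x. f (k x)) \<le> Limsup G (f :: 'a \<Rightarrow> ereal)"
proof -
  have "Limsup F (\<lambda>x. f (k x)) \<le> Limsup (filtermap k F) f" by (rule Limsup_filtermap_ge)
  also have "\<dots> \<le> Limsup G f" using assms unfolding filterlim_def by (rule Limsup_filter_mono)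
  finally show ?thesis .
qed

definition LT :: "nat \<Rightarrow> real \<Rightarrow> int \<times> int \<Rightarrow> ereal" where
  "LT n xi p = ereal (real_of_int (gcd (snd p) (int n)) /
        ((real_of_int (snd p))\<^sup>2 * \<bar>real_of_int (fst p) / real_of_int (snd p) - xi\<bar>))"

lemma lambda_eq: "lambda_n n xi = Limsup (frac_filter xi) (LT n xi)"
  unfolding lambda_n_def LT_def by (simp add: case_prod_unfold)

lemma div_aux1:
  fixes A B X c :: real
  assumes "0 \<le> X" "0 < c" "A * c \<le> B"
  shows "A / X \<le> B / (c * X)"
proof (cases "X = 0")
  case False
  hence "A / X = (A * c) / (c * X)" using assms by (simp add: field_simps)
  also have "\<dots> \<le> B / (c * X)" using assms False by (intro divide_right_mono) auto
  finally show ?thesis .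
qed simp

lemma div_aux2:
  fixes A B X c :: real
  assumes "0 \<le> X" "0 < c" "B \<le> A * c"
  shows "B / X \<le> A / (X / c)"
proof (cases "X = 0")
  case False
  have "A / (X / c) = (A * c) / X" using assms by (simp add: field_simps)
  moreover have "B / X \<le> (A * c) / X" using assms False by (intro divide_right_mono) auto
  ultimately show ?thesis by simp
qed simp

lemma LT_fwd:
  fixes s t c :: int
  assumes "t > 0" "c > 0" "gcd t (int m) * c \<le> gcd (c * t) (int n)"
  shows "LT m (real_of_int c * xi) (s, t) \<le> LT n xi (s, c * t)"
proof -
  define X where "X = (real_of_int t)\<^sup>2 * \<bar>real_of_int s / real_of_int t - real_of_int c * xi\<bar>"
  have e1: "real_of_int s / (real_of_int c * real_of_int t) - xi
      = (real_of_int s / real_of_int t - real_of_int c * xi) / real_of_int c"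
    using assms by (simp add: field_simps)
  have "(real_of_int (c * t))\<^sup>2 * \<bar>real_of_int s / real_of_int (c * t) - xi\<bar>
      = (real_of_int c)\<^sup>2 * (real_of_int t)\<^sup>2 * (\<bar>real_of_int s / real_of_int t - real_of_int c * xi\<bar> / real_of_int c)"
    using assms by (simp add: e1 abs_divide power_mult_distrib)
  also have "\<dots> = real_of_int c * X"
    unfolding X_def using assms by (simp add: field_simps power2_eq_square)
  finally have e2: "(real_of_int (c * t))\<^sup>2 * \<bar>real_of_int s / real_of_int (c * t) - xi\<bar> = real_of_int c * X" .
  have "real_of_int (gcd t (int m)) * real_of_int c \<le> real_of_int (gcd (c * t) (int n))"
    using assms(3) by (metis of_int_le_iff of_int_mult)
  hence "real_of_int (gcd t (int m)) / X \<le> real_of_int (gcd (c * t) (int n)) / (real_of_int c * X)"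
    using assms by (intro div_aux1) (auto simp: X_def)
  thus ?thesis unfolding LT_def using e2 X_def by simp
qed

lemma LT_bwd:
  fixes s g c u :: int
  assumes "u > 0" "c > 0" "g > 0" "g * c \<le> gcd (g * u) (int m) * c"
     "gcd (g * c * u) (int n) = g * c"
  shows "LT n xi (s, g * c * u) \<le> LT m (real_of_int c * xi) (s, g * u)"
proof -
  define t where "t = g * c * u"
  define X where "X = (real_of_int t)\<^sup>2 * \<bar>real_of_int s / real_of_int t - xi\<bar>"
  have e1: "real_of_int s / (real_of_int g * real_of_int u) - real_of_int c * xi
      = real_of_int c * (real_of_int s / real_of_int t - xi)"
    using assms by (simp add: field_simps t_def)
  have "(real_of_int (g * u))\<^sup>2 * \<bar>real_of_int s / real_of_int (g * u) - real_of_int c * xi\<bar>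
      = (real_of_int g * real_of_int u)\<^sup>2 * (real_of_int c * \<bar>real_of_int s / real_of_int t - xi\<bar>)"
    using assms by (simp add: e1 abs_mult)
  also have "\<dots> = X / real_of_int c"
    unfolding X_def t_def using assms by (simp add: field_simps power2_eq_square)
  finally have e2: "(real_of_int (g * u))\<^sup>2 * \<bar>real_of_int s / real_of_int (g * u) - real_of_int c * xi\<bar> = X / real_of_int c" .
  have "real_of_int (g * c) \<le> real_of_int (gcd (g * u) (int m)) * real_of_int c"
    using assms(4) by (metis of_int_le_iff of_int_mult)
  hence "real_of_int (g * c) / X \<le> real_of_int (gcd (g * u) (int m)) / (X / real_of_int c)"
    using assms by (intro div_aux2) (auto simp: X_def)
  thus ?thesis unfolding LT_def using e2 X_def t_def assms(5) by simp
qed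


definition MT :: "nat \<Rightarrow> real \<Rightarrow> real \<Rightarrow> int \<times> int \<Rightarrow> ereal" where
  "MT n xi xi' p = (let s = real_of_int (fst p); t = real_of_int (snd p);
          d = \<bar>s - t * xi\<bar> * \<bar>s - t * xi'\<bar> in
      if d = 0 then \<infinity>
      else ereal (real_of_int (gcd (snd p) (int n)) * \<bar>xi - xi'\<bar> / d))"

lemma mu_eq: "mu_n n xi xi' = (SUP p \<in> (UNIV :: (int \<times> int) set) - {(0,0)}. MT n xi xi' p)"
  unfolding mu_n_def MT_def by (rule refl)

lemma MT_fwd:
  fixes s t c :: int
  assumes "c > 0" "gcd t (int m) * c \<le> gcd (c * t) (int n)"
  shows "MT m (real_of_int c * xi) (real_of_int c * xi') (s, t) \<le> MT n xi xi' (s, c * t)"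
proof -
  define d where "d = \<bar>real_of_int s - real_of_int (c * t) * xi\<bar> * \<bar>real_of_int s - real_of_int (c * t) * xi'\<bar>"
  have dd: "\<bar>real_of_int s - real_of_int t * (real_of_int c * xi)\<bar> * \<bar>real_of_int s - real_of_int t * (real_of_int c * xi')\<bar> = d"
    unfolding d_def by (simp add: algebra_simps)
  have ab: "\<bar>real_of_int c * xi - real_of_int c * xi'\<bar> = real_of_int c * \<bar>xi - xi'\<bar>"
    using assms by (simp add: right_diff_distrib[symmetric] abs_mult)
  have g: "real_of_int (gcd t (int m)) * real_of_int c \<le> real_of_int (gcd (c * t) (int n))"
    using assms(2) by (metis of_int_le_iff of_int_mult)
  show ?thesis
  proof (cases "d = 0")
    case False
    have "d > 0" using False unfolding d_def by auto
    have "real_of_int (gcd t (int m)) * (real_of_int c * \<bar>xi - xi'\<bar>) / d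
        \<le> real_of_int (gcd (c * t) (int n)) * \<bar>xi - xi'\<bar> / d"
      using \<open>d > 0\<close> g by (intro divide_right_mono) (auto simp: mult.assoc[symmetric] intro: mult_right_mono)
    thus ?thesis unfolding MT_def Let_def using dd ab False by (simp add: d_def)
  qed (use dd in \<open>simp add: MT_def Let_def d_def\<close>)
qed

lemma MT_bwd:
  fixes s g c u :: int
  assumes "c > 0" "g * c \<le> gcd (g * u) (int m) * c" "gcd (g * c * u) (int n) = g * c"
  shows "MT n xi xi' (s, g * c * u) \<le> MT m (real_of_int c * xi) (real_of_int c * xi') (s, g * u)"
proof -
  define d where "d = \<bar>real_of_int s - real_of_int (g * c * u) * xi\<bar> * \<bar>real_of_int s - real_of_int (g * c * u) * xi'\<bar>"
  have dd: "\<bar>real_of_int s - real_of_int (g * u) * (real_of_int c * xi)\<bar> * \<bar>real_of_int s - real_of_int (g * u) * (real_of_int c * xi')\<bar> = d"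
    unfolding d_def by (simp add: algebra_simps)
  have ab: "\<bar>real_of_int c * xi - real_of_int c * xi'\<bar> = real_of_int c * \<bar>xi - xi'\<bar>"
    using assms by (simp add: right_diff_distrib[symmetric] abs_mult)
  have g: "real_of_int (g * c) \<le> real_of_int (gcd (g * u) (int m)) * real_of_int c"
    using assms(2) by (metis of_int_le_iff of_int_mult)
  show ?thesis
  proof (cases "d = 0")
    case False
    have "d > 0" using False unfolding d_def by auto
    have "real_of_int (g * c) * \<bar>xi - xi'\<bar> / d
        \<le> real_of_int (gcd (g * u) (int m)) * (real_of_int c * \<bar>xi - xi'\<bar>) / d"
      using \<open>d > 0\<close> g by (intro divide_right_mono) (auto simp: mult.assoc[symmetric] intro: mult_right_mono)
    thus ?thesis unfolding MT_def Let_def using dd ab False assms(3) by (simp add: d_def)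
  next
    case True
    have "MT m (real_of_int c * xi) (real_of_int c * xi') (s, g * u) = \<infinity>"
      by (simp only: MT_def Let_def fst_conv snd_conv dd True refl if_True)
    thus ?thesis by simp
  qed
qed


lemma choose_cg:
  fixes d0 :: int and m n :: nat
  assumes "0 < m" "0 < n" "m dvd n" "d0 > 0" "d0 dvd int n"
  shows "\<exists>g c. g > 0 \<and> c > 0 \<and> d0 = g * c \<and> g dvd int m \<and> int m * c dvd int n"
proof -
  define g where "g = gcd d0 (int m)"
  define c where "c = d0 div g"
  have gpos: "g > 0" unfolding g_def using assms by simp
  have d0: "d0 = g * c" unfolding c_def g_def by simp
  have cpos: "c > 0" using d0 gpos assms(4) by (simp add: zero_less_mult_iff)
  have "\<bar>d0\<bar> * \<bar>int m\<bar> = g * lcm d0 (int m)" unfolding g_def by (rule prod_gcd_lcm_int)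
  hence "g * c * int m = g * lcm d0 (int m)" using d0 assms by simp
  hence "c * int m = lcm d0 (int m)" using gpos by simp
  hence l: "lcm d0 (int m) = int m * c" by (metis mult.commute)
  have "lcm d0 (int m) dvd int n" using assms by (intro lcm_least) auto
  hence "int m * c dvd int n" by (simp only: l)
  moreover have "g dvd int m" unfolding g_def by (rule gcd_dvd2)
  ultimately show ?thesis using gpos cpos d0 by blast
qed

lemma divisors_D:
  fixes n :: nat assumes "0 < n"
  shows "finite {d::int. 0 < d \<and> d dvd int n}" "{d::int. 0 < d \<and> d dvd int n} \<noteq> {}"
    "\<And>t. gcd t (int n) \<in> {d::int. 0 < d \<and> d dvd int n}"
proof -
  have "{d::int. 0 < d \<and> d dvd int n} \<subseteq> {1..int n}"
    using assms zdvd_imp_le[of _ "int n"] by auto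
  thus "finite {d::int. 0 < d \<and> d dvd int n}" by (rule finite_subset) simp
  show "{d::int. 0 < d \<and> d dvd int n} \<noteq> {}" by (auto intro!: exI[of _ 1])
  fix t show "gcd t (int n) \<in> {d::int. 0 < d \<and> d dvd int n}" using assms by simp
qed

lemma markoff_sub:
  fixes m n :: nat
  assumes "0 < m" "0 < n" "m dvd n"
  shows "\<exists>c::int. c > 0 \<and> mu_n n xi xi' = mu_n m (real_of_int c * xi) (real_of_int c * xi')"
proof -
  define S where "S = (UNIV :: (int \<times> int) set) - {(0,0)}"
  define D where "D = {d::int. 0 < d \<and> d dvd int n}"
  note DD = divisors_D[OF assms(2), folded D_def]
  obtain d0 where d0: "d0 \<in> D"
    and sp: "(SUP p\<in>S. MT n xi xi' p) \<le> (SUP p\<in>S \<inter> {p. gcd (snd p) (int n) = d0}. MT n xi xi' p)"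
    using SUP_split[OF DD(1) DD(2), of S "\<lambda>d. {p. gcd (snd p) (int n) = d}" "MT n xi xi'"] DD(3)
    by blast
  obtain g c where gc: "g > 0" "c > 0" "d0 = g * c" "g dvd int m" "int m * c dvd int n"
    using choose_cg[OF assms, of d0] d0 unfolding D_def by blast
  have le1: "(SUP p\<in>S \<inter> {p. gcd (snd p) (int n) = d0}. MT n xi xi' p)
      \<le> mu_n m (real_of_int c * xi) (real_of_int c * xi')"
    unfolding mu_eq
  proof (rule SUP_least)
    fix p assume p: "p \<in> S \<inter> {p. gcd (snd p) (int n) = d0}"
    obtain s t where st: "p = (s, t)" by force
    have "d0 dvd t" using p st by auto
    then obtain u where u: "t = g * c * u" using gc by (auto elim!: dvdE)
    have S': "(s, g * u) \<in> UNIV - {(0,0)}" using p st u gc by (auto simp: S_def)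
    have "MT n xi xi' p \<le> MT m (real_of_int c * xi) (real_of_int c * xi') (s, g * u)"
      unfolding st u
    proof (rule MT_bwd)
      show "g * c \<le> gcd (g * u) (int m) * c"
        using gc gcd_bwd[of g m u] assms by (intro mult_right_mono) auto
      show "gcd (g * c * u) (int n) = g * c" using p st u gc by auto
    qed (use gc in auto)
    also have "\<dots> \<le> (SUP p\<in>UNIV - {(0,0)}. MT m (real_of_int c * xi) (real_of_int c * xi') p)"
      using S' by (rule SUP_upper)
    finally show "MT n xi xi' p \<le> (SUP p\<in>UNIV - {(0,0)}. MT m (real_of_int c * xi) (real_of_int c * xi') p)" .
  qed
  have le2: "mu_n m (real_of_int c * xi) (real_of_int c * xi') \<le> mu_n n xi xi'"
    unfolding mu_eq
  proof (rule SUP_least)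
    fix p :: "int \<times> int" assume p: "p \<in> UNIV - {(0,0)}"
    obtain s t where st: "p = (s, t)" by force
    have S': "(s, c * t) \<in> UNIV - {(0,0)}" using p st gc by auto
    have "MT m (real_of_int c * xi) (real_of_int c * xi') p \<le> MT n xi xi' (s, c * t)"
      unfolding st using gc assms by (intro MT_fwd gcd_fwd) auto
    also have "\<dots> \<le> (SUP p\<in>UNIV - {(0,0)}. MT n xi xi' p)"
      using S' by (rule SUP_upper)
    finally show "MT m (real_of_int c * xi) (real_of_int c * xi') p \<le> (SUP p\<in>UNIV - {(0,0)}. MT n xi xi' p)" .
  qed
  have "mu_n n xi xi' = mu_n m (real_of_int c * xi) (real_of_int c * xi')"
    using sp le1 le2 unfolding mu_eq S_def by (meson antisym order_trans)
  thus ?thesis using gc by blast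
qed


lemma split_q:
  fixes t g c d0 :: int
  assumes "t > 0 \<and> t = g * c * (t div d0)" "g > 0" "c > 0"
  shows "\<exists>q. q > 0 \<and> t = g * c * q \<and> t div d0 = q"
proof -
  define q where "q = t div d0"
  have t: "t = g * c * q" using assms(1) unfolding q_def by blast
  have "0 < (g * c) * q" using assms(1) t by linarith
  hence "q > 0" by (rule zero_less_mult_pos) (use assms in simp)
  thus ?thesis unfolding q_def[symmetric] using t by blast
qed

lemma lagrange_sub:
  fixes m n :: nat
  assumes "0 < m" "0 < n" "m dvd n"
  shows "\<exists>c::int. c > 0 \<and> lambda_n n xi = lambda_n m (real_of_int c * xi)"
proof -
  define F where "F = frac_filter xi"
  define F' where "F' c = frac_filter (real_of_int c * xi)" for c :: int
  define D where "D = {d::int. 0 < d \<and> d dvd int n}"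
  note DD = divisors_D[OF assms(2), folded D_def]
  define B where "B d = {p :: int \<times> int. gcd (snd p) (int n) = d}" for d
  obtain d0 where d0: "d0 \<in> D"
    and sp: "Limsup F (LT n xi) \<le> Limsup (inf F (principal (B d0))) (LT n xi)"
    using Limsup_split[OF DD(1) DD(2), of "B" F "LT n xi"] DD(3) unfolding B_def by auto
  obtain g c where gc: "g > 0" "c > 0" "d0 = g * c" "g dvd int m" "int m * c dvd int n"
    using choose_cg[OF assms, of d0] d0 unfolding D_def by blast
  define G where "G = inf F (principal (B d0))"
  define k where "k p = (fst p, g * (snd p div d0))" for p :: "int \<times> int"
  have evG: "eventually (\<lambda>p. snd p > 0 \<and> snd p = g * c * (snd p div d0)) G"
    unfolding G_def eventually_inf_principal
    using ff_pos[of xi] unfolding F_def[symmetric]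
  proof eventually_elim
    case (elim p)
    show ?case
    proof
      assume "p \<in> B d0"
      hence "d0 dvd snd p" unfolding B_def by auto
      thus "snd p > 0 \<and> snd p = g * c * (snd p div d0)" using elim gc by simp
    qed
  qed
  have ev1: "eventually (\<lambda>p. LT n xi p \<le> LT m (real_of_int c * xi) (k p)) G"
  proof -
    have "eventually (\<lambda>p. p \<in> B d0) G" unfolding G_def eventually_inf_principal by simp
    with evG show ?thesis
    proof eventually_elim
      case (elim p)
      obtain s t where st: "p = (s, t)" by force
      define u where "u = t div d0"
      have e: "snd p > 0" "snd p = g * c * (snd p div d0)" using elim(1) by auto
      have t: "t = g * c * u" using e(2) unfolding st u_def by simp
      have "0 < (g * c) * u" using e(1) unfolding st t by simp
      hence u: "u > 0" by (rule zero_less_mult_pos) (use gc in simp)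
      have "LT n xi (s, g * c * u) \<le> LT m (real_of_int c * xi) (s, g * u)"
      proof (rule LT_bwd)
        show "g * c \<le> gcd (g * u) (int m) * c"
          using gc gcd_bwd[of g m u] assms by (intro mult_right_mono) auto
        have "gcd t (int n) = d0" using elim(2) unfolding st B_def by simp
        thus "gcd (g * c * u) (int n) = g * c" unfolding t gc(3) .
      qed (use gc u in auto)
      moreover have "k p = (s, g * u)" unfolding k_def st u_def by simp
      moreover have "p = (s, g * c * u)" using st t by simp
      ultimately show ?case by simp
    qed
  qed
  have lim1: "filterlim k (F' c) G"
    unfolding F'_def
  proof (rule ff_intro)
    show "eventually (\<lambda>p. snd (k p) > 0) G"
      using evG
    proof eventually_elim
      case (elim p)
      obtain q where "q > 0" "snd p div d0 = q" using split_q[OF elim gc(1,2)] by blast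
      thus ?case using gc by (simp add: k_def)
    qed
    have "filterlim (\<lambda>p. (real_of_int (fst p) / real_of_int (snd p)) * real_of_int c) (at (xi * real_of_int c)) F"
      unfolding F_def using gc by (intro filterlim_compose[OF filterlim_at_mult ff_lim]) auto
    thus "filterlim (\<lambda>p. real_of_int (fst (k p)) / real_of_int (snd (k p))) (at (real_of_int c * xi)) G"
    proof (rule filterlim_mono_eventually)
      show "at (xi * real_of_int c) \<le> at (real_of_int c * xi)" by (simp add: mult.commute)
      show "G \<le> F" unfolding G_def by simp
      show "eventually (\<lambda>p. real_of_int (fst p) / real_of_int (snd p) * real_of_int c
          = real_of_int (fst (k p)) / real_of_int (snd (k p))) G"
        using evG
      proof eventually_elim
        case (elim p)
        obtain q where q: "q > 0" "snd p = g * c * q" "snd p div d0 = q" using split_q[OF elim gc(1,2)] by blast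
        have "real_of_int (fst p) / real_of_int (snd p) * real_of_int c
            = real_of_int (fst p) / (real_of_int g * real_of_int c * real_of_int q) * real_of_int c"
          unfolding q(2) by simp
        also have "\<dots> = real_of_int (fst p) / (real_of_int g * real_of_int q)"
          using gc q by (simp add: field_simps)
        finally show ?case by (simp add: k_def q(3))
      qed
    qed
  qed
  define h where "h p = (fst p, c * snd p)" for p :: "int \<times> int"
  have ev2: "eventually (\<lambda>p. LT m (real_of_int c * xi) p \<le> LT n xi (h p)) (F' c)"
    using ff_pos[of "real_of_int c * xi"] unfolding F'_def
  proof eventually_elim
    case (elim p)
    obtain s t where st: "p = (s, t)" by force
    show ?case unfolding st h_def using elim st gc assms by (auto intro!: LT_fwd gcd_fwd)
  qed
  have lim2: "filterlim h F (F' c)"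
    unfolding F_def
  proof (rule ff_intro)
    show "eventually (\<lambda>p. snd (h p) > 0) (F' c)"
      using ff_pos[of "real_of_int c * xi"] unfolding F'_def
      by eventually_elim (use gc in \<open>auto simp: h_def\<close>)
    have "filterlim (\<lambda>p. (real_of_int (fst p) / real_of_int (snd p)) * (1 / real_of_int c))
        (at ((real_of_int c * xi) * (1 / real_of_int c))) (F' c)"
      unfolding F'_def using gc by (intro filterlim_compose[OF filterlim_at_mult ff_lim]) auto
    moreover have "(real_of_int c * xi) * (1 / real_of_int c) = xi" using gc by simp
    moreover have "(\<lambda>p. (real_of_int (fst p) / real_of_int (snd p)) * (1 / real_of_int c))
        = (\<lambda>p. real_of_int (fst (h p)) / real_of_int (snd (h p)))"
      by (auto simp: h_def)
    ultimately show "filterlim (\<lambda>p. real_of_int (fst (h p)) / real_of_int (snd (h p))) (at xi) (F' c)"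
      by simp
  qed
  have "lambda_n n xi \<le> Limsup G (LT n xi)"
    using sp unfolding lambda_eq F_def G_def .
  also have "\<dots> \<le> Limsup G (\<lambda>p. LT m (real_of_int c * xi) (k p))"
    using ev1 by (rule Limsup_mono)
  also have "\<dots> \<le> Limsup (F' c) (LT m (real_of_int c * xi))"
    using lim1 by (rule Limsup_filter_mono')
  also have "\<dots> = lambda_n m (real_of_int c * xi)" unfolding lambda_eq F'_def ..
  finally have le1: "lambda_n n xi \<le> lambda_n m (real_of_int c * xi)" .
  have "lambda_n m (real_of_int c * xi) = Limsup (F' c) (LT m (real_of_int c * xi))"
    unfolding lambda_eq F'_def ..
  also have "\<dots> \<le> Limsup (F' c) (\<lambda>p. LT n xi (h p))"
    using ev2 by (rule Limsup_mono)
  also have "\<dots> \<le> Limsup F (LT n xi)"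
    using lim2 by (rule Limsup_filter_mono')
  also have "\<dots> = lambda_n n xi" unfolding lambda_eq F_def ..
  finally have le2: "lambda_n m (real_of_int c * xi) \<le> lambda_n n xi" .
  show ?thesis using le1 le2 gc by (intro exI[of _ c]) auto
qed

lemma main_sub:
  fixes m n :: nat
  assumes "0 < m" "0 < n" "m dvd n"
  shows "Lagrange_n n \<subseteq> Lagrange_n m \<and> Markoff_n n \<subseteq> Markoff_n m"
proof
  show "Lagrange_n n \<subseteq> Lagrange_n m"
  proof
    fix x assume "x \<in> Lagrange_n n"
    then obtain xi where xi: "xi \<notin> \<rat>" "lambda_n n xi = ereal x" unfolding Lagrange_n_def by auto
    obtain c :: int where c: "c > 0" "lambda_n n xi = lambda_n m (real_of_int c * xi)"
      using lagrange_sub[OF assms] by blast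
    have "real_of_int c * xi \<notin> \<rat>"
    proof
      assume "real_of_int c * xi \<in> \<rat>"
      hence "(real_of_int c * xi) / real_of_int c \<in> \<rat>" by (intro Rats_divide) auto
      thus False using xi c by simp
    qed
    thus "x \<in> Lagrange_n m" using xi c unfolding Lagrange_n_def by auto
  qed
  show "Markoff_n n \<subseteq> Markoff_n m"
  proof
    fix x assume "x \<in> Markoff_n n"
    then obtain xi xi' where xi: "xi \<noteq> xi'" "mu_n n xi xi' = ereal x" unfolding Markoff_n_def by auto
    obtain c :: int where c: "c > 0" "mu_n n xi xi' = mu_n m (real_of_int c * xi) (real_of_int c * xi')"
      using markoff_sub[OF assms] by blast
    have "real_of_int c * xi \<noteq> real_of_int c * xi'" using xi c by simp
    moreover have "mu_n m (real_of_int c * xi) (real_of_int c * xi') = ereal x" using xi(2) unfolding c(2) .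
    ultimately show "x \<in> Markoff_n m" unfolding Markoff_n_def by blast
  qed
qed

theorem corollary3p2:
  fixes m n :: nat
  assumes "0 < m" and "0 < n" and "m dvd n"
  shows "Lagrange_n n \<subseteq> Lagrange_n m \<and> Markoff_n n \<subseteq> Markoff_n m
         \<and> Lagrange_n n \<subseteq> Lagrange_n 1 \<and> Markoff_n n \<subseteq> Markoff_n 1"
  using main_sub[OF assms] main_sub[of 1 n] assms by auto

end
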